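(* For an integer $n\geq 2$, let $f=f_n:\mathbb{R}\to\mathbb{R}$ be the continuous function which equals $1$ on $[\frac{1}{n},1-\frac{1}{n}]$, equals $-1$ on $[-1+\frac{1}{n},-\frac{1}{n}]$, equals $0$ for $|t|\geq 1$, and is linear on each of the intervals $[-1,-1+\frac{1}{n}]$, $[-\frac{1}{n},\frac{1}{n}]$ and $[1-\frac{1}{n},1]$. Let $\phi_n(x)=c_n\left(1-\frac{x^2}{4}\right)^{n^2}$, with $c_n>0$ chosen so that $\int_{-2}^2\phi_n(x)\,dx=1$, and let $A(x,t)=|f(t+x)+f(t-x)-2f(t)|$. Then, as $n\to\infty$, $$\int_0^2\int_0^1 \frac{A(x,t)}{t}\,dt\;\phi_n(x)\,dx = o(\log n).$$ *)

theory Defs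
  imports "HOL-Analysis.Analysis" "HOL-Library.Landau_Symbols"
begin

definition fn :: "nat \<Rightarrow> real \<Rightarrow> real" where
  "fn n t =
     (if t \<le> -1 then 0
      else if t \<le> -1 + 1 / real n then - real n * (t + 1)
      else if t \<le> - 1 / real n then -1
      else if t \<le> 1 / real n then real n * t
      else if t \<le> 1 - 1 / real n then 1
      else if t \<le> 1 then real n * (1 - t)
      else 0)"

definition cn :: "nat \<Rightarrow> real" where
  "cn n = 1 / integral {-2..2} (\<lambda>x. (1 - x\<^sup>2 / 4) ^ (n\<^sup>2))"

definition phin :: "nat \<Rightarrow> real \<Rightarrow> real" where
  "phin n x = cn n * (1 - x\<^sup>2 / 4) ^ (n\<^sup>2)"

definition An :: "nat \<Rightarrow> real \<Rightarrow> real \<Rightarrow> real" where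
  "An n x t = \<bar>fn n (t + x) + fn n (t - x) - 2 * fn n t\<bar>"

definition In :: "nat \<Rightarrow> real" where
  "In n = integral {0..2} (\<lambda>x. integral {0..1} (\<lambda>t. An n x t / t) * phin n x)"

end

theory Submission
  imports Defs "HOL-Real_Asymp.Real_Asymp"
begin

definition gg :: "real \<Rightarrow> real \<Rightarrow> real" where
  "gg N u = (if u \<le> -N then 0 else if u \<le> -N + 1 then -u - N else if u \<le> -1 then -1
     else if u \<le> 1 then u else if u \<le> N - 1 then 1 else if u \<le> N then N - u else 0)"

lemma gg_lip: "N \<ge> 2 \<Longrightarrow> \<bar>gg N u - gg N v\<bar> \<le> \<bar>u - v\<bar>"
  unfolding gg_def by (auto split: if_splits)

lemma gg_odd: "N \<ge> 2 \<Longrightarrow> gg N (-u) = - gg N u"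
  unfolding gg_def by (auto split: if_splits)

lemma gg_bound: "N \<ge> 2 \<Longrightarrow> \<bar>gg N u\<bar> \<le> 1"
  unfolding gg_def by (auto split: if_splits)

lemma gg_one: "1 \<le> u \<Longrightarrow> u \<le> N - 1 \<Longrightarrow> gg N u = 1"
  unfolding gg_def by (auto split: if_splits)

lemma fn_gg:
  assumes "n \<ge> 2"
  shows "fn n t = gg (real n) (real n * t)"
proof -
  have np: "real n > 0" using assms by simp
  have k: "real n * (1 / real n) = 1" using np by simp
  have e: "\<And>a b. (a \<le> b) = (real n * a \<le> real n * b)" using np by simp
  have 1: "(t \<le> -1) = (real n * t \<le> - real n)" using e[of t "-1"] by simp
  have 2: "(t \<le> -1 + 1 / real n) = (real n * t \<le> - real n + 1)"
    using e[of t "-1 + 1/real n"] k by (simp add: algebra_simps)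
  have 3: "(t \<le> - 1 / real n) = (real n * t \<le> - 1)"
    using e[of t "-1/real n"] k by (simp add: algebra_simps)
  have 4: "(t \<le> 1 / real n) = (real n * t \<le> 1)"
    using e[of t "1/real n"] k by (simp add: algebra_simps)
  have 5: "(t \<le> 1 - 1 / real n) = (real n * t \<le> real n - 1)"
    using e[of t "1 - 1/real n"] k by (simp add: algebra_simps)
  have 6: "(t \<le> 1) = (real n * t \<le> real n)" using e[of t 1] by simp
  show ?thesis unfolding fn_def gg_def 1 2 3 4 5 6 by (simp add: algebra_simps)
qed

lemma fn_lip: "n \<ge> 2 \<Longrightarrow> \<bar>fn n a - fn n b\<bar> \<le> real n * \<bar>a - b\<bar>"
proof -
  assume n: "n \<ge> 2"
  have "\<bar>fn n a - fn n b\<bar> \<le> \<bar>real n * a - real n * b\<bar>"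
    unfolding fn_gg[OF n] by (rule gg_lip) (use n in simp)
  also have "\<dots> = real n * \<bar>a - b\<bar>" by (simp add: abs_mult right_diff_distrib[symmetric])
  finally show ?thesis .
qed

lemma fn_odd: "n \<ge> 2 \<Longrightarrow> fn n (-t) = - fn n t"
  using gg_odd[of "real n" "real n * t"] by (simp add: fn_gg)

lemma fn_bound: "n \<ge> 2 \<Longrightarrow> \<bar>fn n t\<bar> \<le> 1"
  using gg_bound[of "real n" "real n * t"] by (simp add: fn_gg)

lemma fn_one: "n \<ge> 2 \<Longrightarrow> 1 / real n \<le> t \<Longrightarrow> t \<le> 1 - 1 / real n \<Longrightarrow> fn n t = 1"
proof -
  assume n: "n \<ge> 2" and a: "1 / real n \<le> t" "t \<le> 1 - 1 / real n"
  have np: "real n > 0" using n by simp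
  have "real n * (1 / real n) \<le> real n * t" using a np by (intro mult_left_mono) auto
  hence 1: "1 \<le> real n * t" using np by simp
  have "real n * t \<le> real n * (1 - 1 / real n)" using a np by (intro mult_left_mono) auto
  hence 2: "real n * t \<le> real n - 1" using np by (simp add: algebra_simps)
  show ?thesis using gg_one[OF 1 2] by (simp add: fn_gg[OF n])
qed

lemma abs3: "\<bar>(a::real) + b - 2 * c\<bar> \<le> \<bar>a\<bar> + \<bar>b\<bar> + 2 * \<bar>c\<bar>" by linarith

lemma An_nonneg: "0 \<le> An n x t" unfolding An_def by simp

lemma An_small: assumes n: "n \<ge> 2" and t: "0 \<le> t" shows "An n x t \<le> 4 * real n * t"
proof -
  have o: "fn n x + fn n (-x) = 0" "fn n 0 = 0" using fn_odd[OF n, of x] fn_odd[OF n, of 0] by auto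
  have "An n x t = \<bar>(fn n (t + x) - fn n x) + (fn n (t - x) - fn n (-x)) - 2 * (fn n t - fn n 0)\<bar>"
    unfolding An_def using o by (simp add: algebra_simps)
  also have "\<dots> \<le> \<bar>fn n (t + x) - fn n x\<bar> + \<bar>fn n (t - x) - fn n (-x)\<bar> + 2 * \<bar>fn n t - fn n 0\<bar>"
    by (rule abs3)
  also have "\<dots> \<le> real n * t + real n * t + 2 * (real n * t)"
    using fn_lip[OF n, of "t+x" x] fn_lip[OF n, of "t-x" "-x"] fn_lip[OF n, of t 0] t
    by (intro add_mono mult_left_mono) auto
  finally show ?thesis by (simp add: mult_ac)
qed

lemma An_le4: "n \<ge> 2 \<Longrightarrow> An n x t \<le> 4"
  unfolding An_def using fn_bound[of n "t+x"] fn_bound[of n "t-x"] fn_bound[of n t] by linarith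

lemma An_zero: assumes n: "n \<ge> 2" and x: "0 \<le> x" and t: "1 / real n + x \<le> t" "t < 1/2"
  shows "An n x t = 0"
proof -
  have "fn n t = 1" "fn n (t + x) = 1" "fn n (t - x) = 1"
    using t x by (auto intro!: fn_one[OF n])
  thus ?thesis unfolding An_def by simp
qed

lemma inner_pt1: "n \<ge> 2 \<Longrightarrow> 0 \<le> t \<Longrightarrow> An n x t / t \<le> 4 * real n"
proof -
  assume n: "n \<ge> 2" and t: "0 \<le> t"
  show ?thesis
  proof (cases "t = 0")
    case False
    hence "t > 0" using t by simp
    thus ?thesis using An_small[OF n t, of x] by (simp add: divide_le_eq mult_ac)
  qed simp
qed

lemma inner_pt2: assumes n: "n \<ge> 2" and x: "0 \<le> x" and t: "1 / real n + x \<le> t"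
  shows "An n x t / t \<le> 8"
proof (cases "t < 1/2")
  case True thus ?thesis using An_zero[OF n x t True] by simp
next
  case False
  hence "t \<ge> 1/2" by simp
  thus ?thesis using An_le4[OF n, of x t] by (simp add: divide_le_eq)
qed

lemma inner_bound:
  assumes n: "n \<ge> 2" and x: "0 \<le> x"
  shows "integral {0..1} (\<lambda>t. An n x t / t) \<le> 12 + 4 * real n * x"
    "0 \<le> integral {0..1} (\<lambda>t. An n x t / t)"
proof -
  let ?g = "\<lambda>t. An n x t / t"
  define c where "c = min 1 (1 / real n + x)"
  have np: "real n > 0" using n by simp
  have c: "0 \<le> c" "c \<le> 1" "c \<le> 1 / real n + x" using x np by (auto simp: c_def)
  show "integral {0..1} ?g \<le> 12 + 4 * real n * x"
  proof (cases "?g integrable_on {0..1}")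
    case True
    have i1: "?g integrable_on {0..c}" "?g integrable_on {c..1}"
      using c by (auto intro: integrable_subinterval_real[OF True])
    have s0: "integral {0..1} ?g = integral {0..c} ?g + integral {c..1} ?g"
      using Henstock_Kurzweil_Integration.integral_combine[OF c(1,2) True] by simp
    have s1: "integral {0..c} ?g \<le> integral {0..c} (\<lambda>_. 4 * real n)"
      by (rule integral_le[OF i1(1)]) (auto intro: inner_pt1[OF n])
    have s2: "integral {c..1} ?g \<le> integral {c..1} (\<lambda>_. 8)"
    proof (rule integral_le[OF i1(2)])
      fix t assume "t \<in> {c..1}"
      hence "t \<ge> c" "t \<le> 1" by auto
      show "?g t \<le> 8"
      proof (cases "1 / real n + x \<le> t")
        case True thus ?thesis by (rule inner_pt2[OF n x])
      next
        case False
        hence "c = 1" using \<open>t \<ge> c\<close> by (auto simp: c_def)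
        hence "t = 1" using \<open>t \<ge> c\<close> \<open>t \<le> 1\<close> by simp
        thus ?thesis using An_le4[OF n, of x t] by simp
      qed
    qed auto
    have s3: "integral {0..c} (\<lambda>_. 4 * real n) + integral {c..1} (\<lambda>_. 8) = 4 * real n * c + 8 * (1 - c)"
      using c by simp
    have s4: "4 * real n * c + 8 * (1 - c) \<le> 4 * real n * (1 / real n + x) + 8"
      using c np by (intro add_mono mult_left_mono) auto
    have s5: "4 * real n * (1 / real n + x) + 8 = 12 + 4 * real n * x" using np by (simp add: algebra_simps)
    show ?thesis using s0 s1 s2 s3 s4 s5 by linarith
  next
    case False thus ?thesis using np x by (simp add: not_integrable_integral)
  qed
  show "0 \<le> integral {0..1} ?g"
  proof (cases "?g integrable_on {0..1}")
    case True thus ?thesis by (rule integral_nonneg) (auto intro!: divide_nonneg_nonneg An_nonneg)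
  qed (simp add: not_integrable_integral)
qed

lemma p_cont: "continuous_on S (\<lambda>x::real. (1 - x\<^sup>2 / 4) ^ N)"
  by (intro continuous_intros) auto

lemma sq_le4: "\<bar>x::real\<bar> \<le> 2 \<Longrightarrow> x\<^sup>2 \<le> 4"
proof -
  assume "\<bar>x\<bar> \<le> 2"
  hence "\<bar>x\<bar>\<^sup>2 \<le> 2\<^sup>2" by (intro power_mono) auto
  thus ?thesis by simp
qed

lemma p_int: "(\<lambda>x::real. (1 - x\<^sup>2 / 4) ^ N) integrable_on {a..b}"
  by (rule integrable_continuous_interval[OF p_cont])

lemma p_nonneg: "x \<in> {-2..2} \<Longrightarrow> 0 \<le> (1 - (x::real)\<^sup>2 / 4) ^ N"
proof -
  assume "x \<in> {-2..2}"
  hence "x\<^sup>2 \<le> 4" by (intro sq_le4) auto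
  thus ?thesis by simp
qed

lemma P_lower:
  assumes n: "n \<ge> 2"
  shows "3 / (4 * real n) \<le> integral {-2..2} (\<lambda>x::real. (1 - x\<^sup>2 / 4) ^ (n\<^sup>2))"
proof -
  have np: "real n > 0" using n by simp
  have inv: "1 / real n \<le> 2" using n by (simp add: divide_le_eq)
  have "integral {0..1 / real n} (\<lambda>_. 3/4::real) \<le> integral {0..1 / real n} (\<lambda>x::real. (1 - x\<^sup>2 / 4) ^ (n\<^sup>2))"
  proof (rule integral_le[OF _ p_int])
    fix x :: real assume x: "x \<in> {0..1 / real n}"
    have "real n * x \<le> 1" using x np by (simp add: le_divide_eq mult.commute)
    moreover have "0 \<le> real n * x" using x by simp
    ultimately have nx: "(real n * x)\<^sup>2 \<le> 1" by (simp add: power_le_one)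
    have "x\<^sup>2 \<le> 4" using x inv by (intro sq_le4) auto
    hence "-1 \<le> - x\<^sup>2 / 4" by simp
    from Bernoulli_inequality[OF this, of "n\<^sup>2"]
    have "1 + real (n\<^sup>2) * (- x\<^sup>2 / 4) \<le> (1 - x\<^sup>2 / 4) ^ (n\<^sup>2)" by simp
    moreover have "real (n\<^sup>2) * (- x\<^sup>2 / 4) = - (real n * x)\<^sup>2 / 4" by (simp add: power_mult_distrib)
    ultimately show "3/4 \<le> (1 - x\<^sup>2 / 4) ^ (n\<^sup>2)" using nx by linarith
  qed auto
  also have "\<dots> \<le> integral {-2..2} (\<lambda>x::real. (1 - x\<^sup>2 / 4) ^ (n\<^sup>2))"
    using inv by (intro integral_subset_le p_int ballI p_nonneg) auto
  finally show ?thesis using np by simp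
qed

lemma xp_int: "((\<lambda>x::real. x * (1 - x\<^sup>2 / 4) ^ N) has_integral 2 / (real N + 1)) {0..2}"
proof -
  define G where "G x = - (2 / (real N + 1)) * (1 - x\<^sup>2 / 4) ^ (N + 1)" for x :: real
  have "((\<lambda>x::real. x * (1 - x\<^sup>2 / 4) ^ N) has_integral G 2 - G 0) {0..2}"
  proof (rule fundamental_theorem_of_calculus)
    fix x :: real assume "x \<in> {0..2}"
    have "(G has_real_derivative x * (1 - x\<^sup>2 / 4) ^ N) (at x within {0..2})"
      unfolding G_def
      by ((rule derivative_eq_intros refl | simp)+, simp add: add.commute)
    thus "(G has_vector_derivative x * (1 - x\<^sup>2 / 4) ^ N) (at x within {0..2})"
      by (simp add: has_real_derivative_iff_has_vector_derivative)
  qed simp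
  moreover have "G 2 - G 0 = 2 / (real N + 1)" by (simp add: G_def)
  ultimately show ?thesis by simp
qed

lemma In_bound:
  assumes n: "n \<ge> 2"
  shows "0 \<le> In n" "In n \<le> 23"
proof -
  define p where "p = (\<lambda>x::real. (1 - x\<^sup>2 / 4) ^ (n\<^sup>2))"
  define P where "P = integral {-2..2} p"
  define c where "c = cn n"
  have np: "real n > 0" using n by simp
  have PL: "3 / (4 * real n) \<le> P" using P_lower[OF n] by (simp add: P_def p_def)
  have Ppos: "P > 0" using PL np by (smt (verit) divide_pos_pos)
  have cdef: "c = 1 / P" by (simp add: c_def cn_def P_def p_def)
  have cP: "c * P = 1" using Ppos cdef by simp
  have cpos: "c > 0" using cdef Ppos by simp
  have cle: "c \<le> 4 * real n / 3"
  proof -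
    have "c = 1 / P" by (rule cdef)
    also have "\<dots> \<le> 1 / (3 / (4 * real n))" using PL np Ppos by (intro divide_left_mono) (auto intro!: mult_pos_pos)
    finally show ?thesis by simp
  qed
  have phi: "phin n x = c * p x" for x by (simp add: phin_def c_def p_def)
  let ?inner = "\<lambda>x. integral {0..1} (\<lambda>t. An n x t / t)"
  let ?F = "\<lambda>x. ?inner x * phin n x"
  have Fnn: "0 \<le> ?F x" if "x \<in> {0..2}" for x
    using that inner_bound(2)[OF n, of x] p_nonneg[of x "n\<^sup>2"] cpos
    by (auto simp: phi p_def intro!: mult_nonneg_nonneg)
  have I0: "integral {0..2} p \<le> P" unfolding P_def p_def
    by (intro integral_subset_le p_int ballI p_nonneg) auto
  have hp: "(p has_integral integral {0..2} p) {0..2}" unfolding p_def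
    using p_int by (rule integrable_integral)
  have hxp: "((\<lambda>x. x * p x) has_integral 2 / (real (n\<^sup>2) + 1)) {0..2}"
    unfolding p_def by (rule xp_int)
  define B where "B = 12 * c * integral {0..2} p + 4 * real n * c * (2 / (real (n\<^sup>2) + 1))"
  have hH: "((\<lambda>x. 12 * c * p x + 4 * real n * c * (x * p x)) has_integral B) {0..2}"
    unfolding B_def by (intro has_integral_add has_integral_mult_right hp hxp)
  have FH: "?F x \<le> 12 * c * p x + 4 * real n * c * (x * p x)" if "x \<in> {0..2}" for x
  proof -
    have "?F x \<le> (12 + 4 * real n * x) * phin n x"
      using that inner_bound(1)[OF n, of x] p_nonneg[of x "n\<^sup>2"] cpos
      by (intro mult_right_mono) (auto simp: phi p_def)
    thus ?thesis by (simp add: phi algebra_simps)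
  qed
  have B: "B \<le> 23"
  proof -
    have "c * integral {0..2} p \<le> c * P" using I0 cpos by (intro mult_left_mono) auto
    hence 1: "12 * c * integral {0..2} p \<le> 12" using cP by simp
    have "4 * real n * c * (2 / (real (n\<^sup>2) + 1)) \<le> 4 * real n * (4 * real n / 3) * (2 / (real (n\<^sup>2) + 1))"
      using cle np by (intro mult_right_mono mult_left_mono) auto
    also have "\<dots> = 32 / 3 * ((real n)\<^sup>2 / ((real n)\<^sup>2 + 1))" by (simp add: power2_eq_square)
    also have "\<dots> \<le> 32 / 3 * 1"
    proof (intro mult_left_mono)
      have "\<not> (real n)\<^sup>2 + 1 < 0" by (smt (verit) zero_le_power2)
      thus "(real n)\<^sup>2 / ((real n)\<^sup>2 + 1) \<le> 1" by (simp add: divide_le_eq not_less)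
    qed simp
    finally show ?thesis using 1 unfolding B_def by linarith
  qed
  show "0 \<le> In n"
  proof (cases "?F integrable_on {0..2}")
    case True thus ?thesis unfolding In_def by (rule integral_nonneg) (rule Fnn)
  qed (simp add: In_def not_integrable_integral)
  show "In n \<le> 23"
  proof (cases "?F integrable_on {0..2}")
    case True
    have "In n \<le> integral {0..2} (\<lambda>x. 12 * c * p x + 4 * real n * c * (x * p x))"
      unfolding In_def by (rule integral_le[OF True]) (use hH FH in auto)
    also have "\<dots> = B" using hH by (rule integral_unique)
    finally show ?thesis using B by simp
  qed (simp add: In_def not_integrable_integral)
qed

theorem lemma3:
  shows "(\<lambda>n. In n) \<in> o(\<lambda>n. ln (real n))"
proof -
  have "(\<lambda>n. In n) \<in> O(\<lambda>_. 1)"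
  proof (rule bigoI[where c = 23])
    show "eventually (\<lambda>n. norm (In n) \<le> 23 * norm (1::real)) at_top"
      using eventually_ge_at_top[of 2] by eventually_elim (use In_bound in auto)
  qed
  moreover have "(\<lambda>_. 1::real) \<in> o(\<lambda>n. ln (real n))" by real_asymp
  ultimately show ?thesis by (rule landau_o.big_small_trans)
qed

end
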